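(* Let $\varphi:\Lambda\to\Gamma$ be a regular covering map of finite simplicial graphs, let $v$ be a vertex of $\Gamma$, $[v]_\varphi$ its $\varphi$-equivalence class, and $\gamma_v$ any permutation of $[v]_\varphi$. Then the map $\gamma$ of $V\Gamma$ defined by $\gamma(w)=\gamma_v(w)$ for $w\in[v]_\varphi$ and $\gamma(w)=w$ otherwise is a graph symmetry of $\Gamma$ which is liftable.
   Context: Graphs are finite simplicial graphs; $\mathrm{lk}(x)$ is the subgraph induced by neighbours of $x$, $\mathrm{st}(x)$ induced by $\mathrm{lk}(x)\cup\{x\}$. $A_\Gamma$ is the right-angled Artin group with generators $V\Gamma$ and relations $[a,b]=1$ for edges; a graph symmetry is regarded as an automorphism of $A_\Gamma$ permuting generators. A covering map $\varphi:\Lambda\to\Gamma$ is a surjective simplicial map mapping the neighbours of each vertex $u$ bijectively onto the neighbours of $\varphi(u)$; regular means the group of graph automorphisms $\mu$ of $\Lambda$ with $\varphi\mu=\varphi$ acts transitively on each fiber. $\phi:A_\Lambda\to A_\Gamma$ is induced by $\varphi$; $f\in\mathrm{Aut}(A_\Gamma)$ is liftable if there is $F\in\mathrm{Aut}(A_\Lambda)$ with $f\circ\phi=\phi\circ F$. For vertices $x,y$ of $\Gamma$, $x\lesssim_\varphi y$ means: for every $u\in\varphi^{-1}(x)$ there is $u'\in\varphi^{-1}(y)$ with $\mathrm{lk}(u)\subseteq\mathrm{st}(u')$; $x,y$ are $\varphi$-equivalent if $x\lesssim_\varphi y$ and $y\lesssim_\varphi x$, and $[v]_\varphi$ is the set of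 vertices $\varphi$-equivalent to $v$. *)

theory Defs
  imports "HOL-Algebra.Group"
begin

definition simple_graph :: "'a set \<Rightarrow> ('a \<Rightarrow> 'a \<Rightarrow> bool) \<Rightarrow> bool" where
  "simple_graph V E \<longleftrightarrow> finite V \<and> (\<forall>x y. E x y \<longrightarrow> x \<in> V \<and> y \<in> V \<and> x \<noteq> y \<and> E y x)"

definition nbrs :: "'a set \<Rightarrow> ('a \<Rightarrow> 'a \<Rightarrow> bool) \<Rightarrow> 'a \<Rightarrow> 'a set" where
  "nbrs V E x = {y \<in> V. E x y}"

text \<open>vertex set of lk(x) and st(x) (these are induced subgraphs, so determined by vertices)\<close>
definition lk :: "'a set \<Rightarrow> ('a \<Rightarrow> 'a \<Rightarrow> bool) \<Rightarrow> 'a \<Rightarrow> 'a set" where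
  "lk V E x = nbrs V E x"

definition st :: "'a set \<Rightarrow> ('a \<Rightarrow> 'a \<Rightarrow> bool) \<Rightarrow> 'a \<Rightarrow> 'a set" where
  "st V E x = insert x (nbrs V E x)"

definition graph_aut :: "'a set \<Rightarrow> ('a \<Rightarrow> 'a \<Rightarrow> bool) \<Rightarrow> ('a \<Rightarrow> 'a) \<Rightarrow> bool" where
  "graph_aut V E g \<longleftrightarrow> bij_betw g V V \<and> (\<forall>x\<in>V. \<forall>y\<in>V. E x y \<longleftrightarrow> E (g x) (g y))"

definition covering_map ::
  "'a set \<Rightarrow> ('a \<Rightarrow> 'a \<Rightarrow> bool) \<Rightarrow> 'b set \<Rightarrow> ('b \<Rightarrow> 'b \<Rightarrow> bool) \<Rightarrow> ('a \<Rightarrow> 'b) \<Rightarrow> bool" where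
  "covering_map VL EL VG EG p \<longleftrightarrow>
     p ` VL = VG \<and>
     (\<forall>x y. EL x y \<longrightarrow> EG (p x) (p y)) \<and>
     (\<forall>u\<in>VL. bij_betw p (nbrs VL EL u) (nbrs VG EG (p u)))"

definition deck_group ::
  "'a set \<Rightarrow> ('a \<Rightarrow> 'a \<Rightarrow> bool) \<Rightarrow> ('a \<Rightarrow> 'b) \<Rightarrow> ('a \<Rightarrow> 'a) set" where
  "deck_group VL EL p = {\<mu>. graph_aut VL EL \<mu> \<and> (\<forall>u\<in>VL. p (\<mu> u) = p u)}"

definition regular_covering ::
  "'a set \<Rightarrow> ('a \<Rightarrow> 'a \<Rightarrow> bool) \<Rightarrow> 'b set \<Rightarrow> ('b \<Rightarrow> 'b \<Rightarrow> bool) \<Rightarrow> ('a \<Rightarrow> 'b) \<Rightarrow> bool" where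
  "regular_covering VL EL VG EG p \<longleftrightarrow>
     covering_map VL EL VG EG p \<and>
     (\<forall>u\<in>VL. \<forall>u'\<in>VL. p u = p u' \<longrightarrow> (\<exists>\<mu>\<in>deck_group VL EL p. \<mu> u = u'))"

definition phi_le ::
  "'a set \<Rightarrow> ('a \<Rightarrow> 'a \<Rightarrow> bool) \<Rightarrow> ('a \<Rightarrow> 'b) \<Rightarrow> 'b \<Rightarrow> 'b \<Rightarrow> bool" where
  "phi_le VL EL p x y \<longleftrightarrow>
     (\<forall>u\<in>VL. p u = x \<longrightarrow> (\<exists>u'\<in>VL. p u' = y \<and> lk VL EL u \<subseteq> st VL EL u'))"

definition phi_equiv ::
  "'a set \<Rightarrow> ('a \<Rightarrow> 'a \<Rightarrow> bool) \<Rightarrow> ('a \<Rightarrow> 'b) \<Rightarrow> 'b \<Rightarrow> 'b \<Rightarrow> bool" where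
  "phi_equiv VL EL p x y \<longleftrightarrow> phi_le VL EL p x y \<and> phi_le VL EL p y x"

definition phi_class ::
  "'a set \<Rightarrow> ('a \<Rightarrow> 'a \<Rightarrow> bool) \<Rightarrow> 'b set \<Rightarrow> ('a \<Rightarrow> 'b) \<Rightarrow> 'b \<Rightarrow> 'b set" where
  "phi_class VL EL VG p v = {w \<in> VG. phi_equiv VL EL p v w}"

text \<open>Words: lists of letters (a, e) where e = True means a and e = False means a inverse.\<close>

type_synonym 'a word = "('a \<times> bool) list"

inductive raag_step :: "('a \<Rightarrow> 'a \<Rightarrow> bool) \<Rightarrow> 'a word \<Rightarrow> 'a word \<Rightarrow> bool" for E where
  cancel: "raag_step E (xs @ [(a, b), (a, \<not> b)] @ ys) (xs @ ys)"
| commute: "E a c \<Longrightarrow> raag_step E (xs @ [(a, b), (c, d)] @ ys) (xs @ [(c, d), (a, b)] @ ys)"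

definition raag_eq :: "('a \<Rightarrow> 'a \<Rightarrow> bool) \<Rightarrow> 'a word \<Rightarrow> 'a word \<Rightarrow> bool" where
  "raag_eq E = equivclp (raag_step E)"

definition raag_words :: "'a set \<Rightarrow> 'a word set" where
  "raag_words V = lists (V \<times> UNIV)"

definition raag_cls :: "'a set \<Rightarrow> ('a \<Rightarrow> 'a \<Rightarrow> bool) \<Rightarrow> 'a word \<Rightarrow> 'a word set" where
  "raag_cls V E w = {w' \<in> raag_words V. raag_eq E w w'}"

definition RAAG :: "'a set \<Rightarrow> ('a \<Rightarrow> 'a \<Rightarrow> bool) \<Rightarrow> 'a word set monoid" where
  "RAAG V E = \<lparr> carrier = raag_cls V E ` raag_words V,
                 mult = (\<lambda>X Y. raag_cls V E ((SOME x. x \<in> X) @ (SOME y. y \<in> Y))),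
                 one = raag_cls V E [] \<rparr>"

definition raag_map ::
  "'a set \<Rightarrow> 'b set \<Rightarrow> ('b \<Rightarrow> 'b \<Rightarrow> bool) \<Rightarrow> ('a \<Rightarrow> 'b) \<Rightarrow> 'a word set \<Rightarrow> 'b word set" where
  "raag_map V1 V2 E2 g X = raag_cls V2 E2 (map (\<lambda>(a, e). (g a, e)) (SOME w. w \<in> X))"

definition liftable ::
  "'a set \<Rightarrow> ('a \<Rightarrow> 'a \<Rightarrow> bool) \<Rightarrow> 'b set \<Rightarrow> ('b \<Rightarrow> 'b \<Rightarrow> bool) \<Rightarrow> ('a \<Rightarrow> 'b)
     \<Rightarrow> ('b word set \<Rightarrow> 'b word set) \<Rightarrow> bool" where
  "liftable VL EL VG EG p f \<longleftrightarrow>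
     (\<exists>F \<in> iso (RAAG VL EL) (RAAG VL EL).
        \<forall>x \<in> carrier (RAAG VL EL). f (raag_map VL VG EG p x) = raag_map VL VG EG p (F x))"

end

theory Submission
  imports Defs
begin


definition inv_word :: "'a word \<Rightarrow> 'a word" where
  "inv_word w = rev (map (\<lambda>(a,e). (a, \<not> e)) w)"
definition ltr :: "('a \<Rightarrow> 'b word) \<Rightarrow> 'a \<times> bool \<Rightarrow> 'b word" where
  "ltr s x = (if snd x then s (fst x) else inv_word (s (fst x)))"
definition wsubst :: "('a \<Rightarrow> 'b word) \<Rightarrow> 'a word \<Rightarrow> 'b word" where
  "wsubst s w = concat (map (ltr s) w)"

lemma wsubst_simps[simp]: "wsubst s [] = []" "wsubst s (c # w) = ltr s c @ wsubst s w"
  "wsubst s (w1 @ w2) = wsubst s w1 @ wsubst s w2"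
  by (auto simp: wsubst_def)

lemma inv_word_simps[simp]: "inv_word [] = []" "inv_word (c # w) = inv_word w @ [(fst c, \<not> snd c)]"
  "inv_word (w1 @ w2) = inv_word w2 @ inv_word w1"
  by (auto simp: inv_word_def case_prod_beta comp_def)

lemma inv_inv[simp]: "inv_word (inv_word w) = w"
  by (induction w) auto

lemma step_ctx: "raag_step E x y \<Longrightarrow> raag_step E (l @ x @ r) (l @ y @ r)"
proof (induction rule: raag_step.induct)
  case (cancel xs a b ys)
  then show ?case using raag_step.cancel[of E "l @ xs" a b "ys @ r"] by simp
next
  case (commute a c xs b d ys)
  then show ?case using raag_step.commute[of E a c "l @ xs" b d "ys @ r"] by simp
qed

lemma equivclp_map:
  assumes "equivclp r x y" and "\<And>x y. r x y \<Longrightarrow> equivclp r' (f x) (f y)"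
  shows "equivclp r' (f x) (f y)"
  using assms(1)
proof (induction rule: equivclp_induct)
  case base then show ?case by simp
next
  case (step y z)
  then show ?case using assms(2) by (meson equivclp_sym equivclp_trans)
qed

lemma eq_ctx: "raag_eq E x y \<Longrightarrow> raag_eq E (l @ x @ r) (l @ y @ r)"
  unfolding raag_eq_def
  by (rule equivclp_map[of "raag_step E" x y "raag_step E" "\<lambda>x. l @ x @ r"]) (auto intro: step_ctx)

lemma eq_refl[simp]: "raag_eq E x x" by (simp add: raag_eq_def)
lemma eq_sym: "raag_eq E x y \<Longrightarrow> raag_eq E y x" by (simp add: raag_eq_def equivclp_sym)
lemma eq_trans: "raag_eq E x y \<Longrightarrow> raag_eq E y z \<Longrightarrow> raag_eq E x z"
  unfolding raag_eq_def by (rule equivclp_trans)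

lemma eq_app: assumes "raag_eq E x x'" "raag_eq E y y'" shows "raag_eq E (x @ y) (x' @ y')"
proof -
  have 1: "raag_eq E (x @ y) (x' @ y)" using eq_ctx[OF assms(1), of "[]" y] by simp
  have 2: "raag_eq E (x' @ y) (x' @ y')" using eq_ctx[OF assms(2), of x' "[]"] by simp
  show ?thesis using eq_trans[OF 1 2] .
qed

lemma eq_cancel: "raag_eq E ([(a,b),(a,\<not>b)]) []"
  unfolding raag_eq_def using raag_step.cancel[of E "[]" a b "[]"] by auto

lemma eq_commute: "E a c \<Longrightarrow> raag_eq E ([(a,b),(c,d)]) [(c,d),(a,b)]"
  unfolding raag_eq_def using raag_step.commute[of E a c "[]" b d "[]"] by auto

lemma eq_right_inv: "raag_eq E (w @ inv_word w) []"
proof (induction w)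
  case Nil then show ?case by simp
next
  case (Cons c w)
  have "raag_eq E (c # (w @ inv_word w) @ [(fst c, \<not> snd c)]) ([c] @ [] @ [(fst c, \<not> snd c)])"
    using eq_ctx[OF Cons.IH, of "[c]" "[(fst c, \<not> snd c)]"] by simp
  moreover have "raag_eq E [c, (fst c, \<not> snd c)] []" using eq_cancel[of E "fst c" "snd c"] by simp
  ultimately show ?case using eq_trans by (metis append_Cons append_Nil append_assoc inv_word_simps(2))
qed

lemma eq_left_inv: "raag_eq E (inv_word w @ w) []"
  using eq_right_inv[of E "inv_word w"] by simp

lemma eq_inv: assumes "raag_eq E x y" shows "raag_eq E (inv_word x) (inv_word y)"
proof -
  have "raag_eq E (inv_word x @ [] ) (inv_word x @ (y @ inv_word y))"
    using eq_app[OF eq_refl eq_sym[OF eq_right_inv], of E "inv_word x" y] by simp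
  then have "raag_eq E (inv_word x) (inv_word x @ y @ inv_word y)" by simp
  moreover have "raag_eq E (inv_word x @ y @ inv_word y) (inv_word x @ x @ inv_word y)"
    using eq_ctx[OF eq_sym[OF assms], of "inv_word x" "inv_word y"] by simp
  moreover have "raag_eq E (inv_word x @ x @ inv_word y) ([] @ inv_word y)"
    using eq_app[OF eq_left_inv eq_refl, of E x "inv_word y"] by simp
  ultimately show ?thesis by (metis eq_trans append_Nil)
qed

definition commutes :: "('a \<Rightarrow> 'a \<Rightarrow> bool) \<Rightarrow> ('b \<Rightarrow> 'b \<Rightarrow> bool) \<Rightarrow> ('a \<Rightarrow> 'b word) \<Rightarrow> bool" where
  "commutes E1 E2 s \<longleftrightarrow> (\<forall>a c b d. E1 a c \<longrightarrow>
     raag_eq E2 (ltr s (a,b) @ ltr s (c,d)) (ltr s (c,d) @ ltr s (a,b)))"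

lemma wsubst_step: assumes "raag_step E1 w w'" "commutes E1 E2 s"
  shows "raag_eq E2 (wsubst s w) (wsubst s w')"
  using assms(1)
proof (induction rule: raag_step.induct)
  case (cancel xs a b ys)
  have h: "raag_eq E2 (ltr s (a,b) @ ltr s (a, \<not> b)) []"
    by (cases b) (auto simp: ltr_def eq_right_inv eq_left_inv)
  show ?case using eq_ctx[OF h, of "wsubst s xs" "wsubst s ys"] by simp
next
  case (commute a c xs b d ys)
  then have h: "raag_eq E2 (ltr s (a,b) @ ltr s (c,d)) (ltr s (c,d) @ ltr s (a,b))"
    using assms(2) unfolding commutes_def by blast
  show ?case using eq_ctx[OF h, of "wsubst s xs" "wsubst s ys"] by simp
qed

lemma wsubst_eq: assumes "raag_eq E1 w w'" "commutes E1 E2 s"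
  shows "raag_eq E2 (wsubst s w) (wsubst s w')"
proof -
  have "\<And>x y. raag_step E1 x y \<Longrightarrow> equivclp (raag_step E2) (wsubst s x) (wsubst s y)"
    using wsubst_step[OF _ assms(2)] unfolding raag_eq_def by blast
  then show ?thesis using equivclp_map[of "raag_step E1" w w' "raag_step E2" "wsubst s"] assms(1)
    unfolding raag_eq_def by blast
qed

lemma wsubst_inv: "wsubst t (inv_word x) = inv_word (wsubst t x)"
  by (induction x) (auto simp: ltr_def)

lemma wsubst_comp: "wsubst t (wsubst s w) = wsubst (\<lambda>a. wsubst t (s a)) w"
  by (induction w) (auto simp: ltr_def wsubst_inv)

lemma wsubst_cong: assumes "\<And>a. a \<in> fst ` set w \<Longrightarrow> raag_eq E (s1 a) (s2 a)"
  shows "raag_eq E (wsubst s1 w) (wsubst s2 w)"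
  using assms
proof (induction w)
  case Nil then show ?case by simp
next
  case (Cons c w)
  have e: "raag_eq E (s1 (fst c)) (s2 (fst c))" using Cons.prems[of "fst c"] by simp
  have h1: "raag_eq E (ltr s1 c) (ltr s2 c)"
  proof (cases "snd c")
    case True then show ?thesis using e by (simp add: ltr_def)
  next
    case False then show ?thesis using eq_inv[OF e] by (simp add: ltr_def)
  qed
  have h2: "raag_eq E (wsubst s1 w) (wsubst s2 w)"
    by (rule Cons.IH) (rule Cons.prems, simp)
  show ?case using eq_app[OF h1 h2] by simp
qed

lemma wsubst_single: "wsubst (\<lambda>a. [(a, True)]) w = w"
  by (induction w) (auto simp: ltr_def)

lemma wsubst_map: "wsubst (\<lambda>a. [(g a, True)]) w = map (\<lambda>(a, e). (g a, e)) w"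
  by (induction w) (auto simp: ltr_def)

lemma inv_word_words: "w \<in> raag_words V \<Longrightarrow> inv_word w \<in> raag_words V"
  by (auto simp: raag_words_def inv_word_def)

lemma wsubst_words: assumes "w \<in> raag_words V1" "\<And>a. a \<in> V1 \<Longrightarrow> s a \<in> raag_words V2"
  shows "wsubst s w \<in> raag_words V2"
  using assms
proof (induction w)
  case Nil then show ?case by (simp add: raag_words_def)
next
  case (Cons c w)
  have "fst c \<in> V1" using Cons.prems(1) by (auto simp: raag_words_def)
  then have "s (fst c) \<in> raag_words V2" using Cons.prems(2) by blast
  then have "ltr s c \<in> raag_words V2" by (auto simp: ltr_def intro: inv_word_words)
  moreover have "wsubst s w \<in> raag_words V2" using Cons by (auto simp: raag_words_def)
  ultimately show ?case by (simp add: raag_words_def)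
qed

lemma cls_self: "w \<in> raag_words V \<Longrightarrow> w \<in> raag_cls V E w"
  by (simp add: raag_cls_def)

lemma cls_eq: assumes "raag_eq E w w'" shows "raag_cls V E w = raag_cls V E w'"
proof -
  have "\<And>z. raag_eq E w z = raag_eq E w' z"
    using eq_trans[OF eq_sym[OF assms]] eq_trans[OF assms] by blast
  then show ?thesis unfolding raag_cls_def by simp
qed

lemma cls_eq_iff: assumes "w \<in> raag_words V" "w' \<in> raag_words V"
  shows "raag_cls V E w = raag_cls V E w' \<longleftrightarrow> raag_eq E w w'"
proof
  assume "raag_cls V E w = raag_cls V E w'"
  then have "w' \<in> raag_cls V E w" using cls_self[of w' V E] assms(2) by simp
  then show "raag_eq E w w'" by (simp add: raag_cls_def)
qed (rule cls_eq)

definition substF :: "'b set \<Rightarrow> ('b \<Rightarrow> 'b \<Rightarrow> bool) \<Rightarrow> ('a \<Rightarrow> 'b word) \<Rightarrow> 'a word set \<Rightarrow> 'b word set" where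
  "substF V2 E2 s X = raag_cls V2 E2 (wsubst s (SOME w. w \<in> X))"

lemma some_cls: assumes "w \<in> raag_words V"
  shows "(SOME x. x \<in> raag_cls V E w) \<in> raag_words V \<and> raag_eq E w (SOME x. x \<in> raag_cls V E w)"
proof -
  have "(SOME x. x \<in> raag_cls V E w) \<in> raag_cls V E w" using cls_self[OF assms] by (rule someI)
  then show ?thesis by (simp add: raag_cls_def)
qed

lemma substF_cls: assumes "w \<in> raag_words V1" "commutes E1 E2 s"
  shows "substF V2 E2 s (raag_cls V1 E1 w) = raag_cls V2 E2 (wsubst s w)"
proof -
  let ?w = "SOME x. x \<in> raag_cls V1 E1 w"
  have "raag_eq E1 w ?w" using some_cls[OF assms(1), of E1] by blast
  then have "raag_eq E2 (wsubst s w) (wsubst s ?w)" using wsubst_eq[OF _ assms(2)] by blast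
  then have "raag_cls V2 E2 (wsubst s ?w) = raag_cls V2 E2 (wsubst s w)" using cls_eq eq_sym by metis
  then show ?thesis unfolding substF_def .
qed

lemma raag_map_substF: "raag_map V1 V2 E2 g = substF V2 E2 (\<lambda>a. [(g a, True)])"
  by (rule ext) (simp add: raag_map_def substF_def wsubst_map)

lemma commutes_single: assumes "\<And>a c. E1 a c \<Longrightarrow> E2 (g a) (g c)"
  shows "commutes E1 E2 (\<lambda>a. [(g a, True)])"
  unfolding commutes_def ltr_def using assms by (auto intro: eq_commute)

lemma carrier_RAAG: "carrier (RAAG V E) = raag_cls V E ` raag_words V"
  by (simp add: RAAG_def)

lemma mult_RAAG: assumes "w1 \<in> raag_words V" "w2 \<in> raag_words V"
  shows "raag_cls V E w1 \<otimes>\<^bsub>RAAG V E\<^esub> raag_cls V E w2 = raag_cls V E (w1 @ w2)"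
proof -
  let ?x = "SOME x. x \<in> raag_cls V E w1" and ?y = "SOME x. x \<in> raag_cls V E w2"
  have "raag_eq E w1 ?x" "raag_eq E w2 ?y" using some_cls[OF assms(1), of E] some_cls[OF assms(2), of E] by auto
  then have "raag_eq E (?x @ ?y) (w1 @ w2)" using eq_app eq_sym by blast
  then have "raag_cls V E (?x @ ?y) = raag_cls V E (w1 @ w2)" by (rule cls_eq)
  then show ?thesis by (simp add: RAAG_def)
qed

lemma words_app: "w1 \<in> raag_words V \<Longrightarrow> w2 \<in> raag_words V \<Longrightarrow> w1 @ w2 \<in> raag_words V"
  by (simp add: raag_words_def)

lemma substF_iso:
  assumes s_w: "\<And>a. a \<in> V \<Longrightarrow> s a \<in> raag_words V" and t_w: "\<And>a. a \<in> V \<Longrightarrow> t a \<in> raag_words V"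
    and cs: "commutes E E s" and ct: "commutes E E t"
    and ts: "\<And>a. a \<in> V \<Longrightarrow> raag_eq E (wsubst t (s a)) [(a, True)]"
    and st: "\<And>a. a \<in> V \<Longrightarrow> raag_eq E (wsubst s (t a)) [(a, True)]"
  shows "substF V E s \<in> iso (RAAG V E) (RAAG V E)"
proof -
  have ts_w: "raag_eq E (wsubst t (wsubst s w)) w" if "w \<in> raag_words V" for w
  proof -
    have "raag_eq E (wsubst (\<lambda>a. wsubst t (s a)) w) (wsubst (\<lambda>a. [(a, True)]) w)"
      using that ts by (intro wsubst_cong) (auto simp: raag_words_def)
    then show ?thesis by (simp add: wsubst_comp wsubst_single)
  qed
  have st_w: "raag_eq E (wsubst s (wsubst t w)) w" if "w \<in> raag_words V" for w
  proof -
    have "raag_eq E (wsubst (\<lambda>a. wsubst s (t a)) w) (wsubst (\<lambda>a. [(a, True)]) w)"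
      using that st by (intro wsubst_cong) (auto simp: raag_words_def)
    then show ?thesis by (simp add: wsubst_comp wsubst_single)
  qed
  have h1: "substF V E s \<in> carrier (RAAG V E) \<rightarrow> carrier (RAAG V E)"
  proof
    fix X assume "X \<in> carrier (RAAG V E)"
    then obtain w where w: "w \<in> raag_words V" "X = raag_cls V E w" unfolding carrier_RAAG by blast
    have "wsubst s w \<in> raag_words V" using wsubst_words[where s=s, OF w(1) s_w] .
    then show "substF V E s X \<in> carrier (RAAG V E)"
      unfolding w(2) substF_cls[OF w(1) cs] carrier_RAAG by blast
  qed
  have h2: "substF V E s (X \<otimes>\<^bsub>RAAG V E\<^esub> Y) = substF V E s X \<otimes>\<^bsub>RAAG V E\<^esub> substF V E s Y"
    if XC: "X \<in> carrier (RAAG V E)" and YC: "Y \<in> carrier (RAAG V E)" for X Y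
  proof -
    obtain w1 where w1: "w1 \<in> raag_words V" "X = raag_cls V E w1" using XC unfolding carrier_RAAG by blast
    obtain w2 where w2: "w2 \<in> raag_words V" "Y = raag_cls V E w2" using YC unfolding carrier_RAAG by blast
    note w = w1(1) w2(1) w1(2) w2(2)
    have sw: "wsubst s w1 \<in> raag_words V" "wsubst s w2 \<in> raag_words V"
      using wsubst_words[where s=s, OF w(1) s_w] wsubst_words[where s=s, OF w(2) s_w] by auto
    have "X \<otimes>\<^bsub>RAAG V E\<^esub> Y = raag_cls V E (w1 @ w2)" using w mult_RAAG by simp
    then have "substF V E s (X \<otimes>\<^bsub>RAAG V E\<^esub> Y) = raag_cls V E (wsubst s (w1 @ w2))"
      using substF_cls[OF words_app[OF w(1,2)] cs] by simp
    also have "\<dots> = substF V E s X \<otimes>\<^bsub>RAAG V E\<^esub> substF V E s Y"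
      using w substF_cls[OF w(1) cs] substF_cls[OF w(2) cs] mult_RAAG[OF sw, of E, symmetric] by simp
    finally show ?thesis .
  qed
  have hom: "substF V E s \<in> hom (RAAG V E) (RAAG V E)"
    unfolding hom_def using h1 h2 by blast
  have bij: "bij_betw (substF V E s) (carrier (RAAG V E)) (carrier (RAAG V E))"
    unfolding bij_betw_def
  proof
    show "inj_on (substF V E s) (carrier (RAAG V E))"
    proof (rule inj_onI)
      fix X Y assume XC: "X \<in> carrier (RAAG V E)" and YC: "Y \<in> carrier (RAAG V E)"
        and eq: "substF V E s X = substF V E s Y"
      obtain w1 where w1: "w1 \<in> raag_words V" "X = raag_cls V E w1" using XC unfolding carrier_RAAG by blast
      obtain w2 where w2: "w2 \<in> raag_words V" "Y = raag_cls V E w2" using YC unfolding carrier_RAAG by blast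
      note w = w1(1) w2(1) w1(2) w2(2)
      have "raag_cls V E (wsubst s w1) = raag_cls V E (wsubst s w2)"
        using eq substF_cls[OF w(1) cs] substF_cls[OF w(2) cs] w by simp
      have sw: "wsubst s w1 \<in> raag_words V" "wsubst s w2 \<in> raag_words V"
        using wsubst_words[where s=s, OF w(1) s_w] wsubst_words[where s=s, OF w(2) s_w] by auto
      then have "raag_eq E (wsubst s w1) (wsubst s w2)"
        using cls_eq_iff[OF sw] \<open>raag_cls V E (wsubst s w1) = raag_cls V E (wsubst s w2)\<close> by blast
      then have "raag_eq E (wsubst t (wsubst s w1)) (wsubst t (wsubst s w2))"
        using wsubst_eq[OF _ ct] by blast
      then have "raag_eq E w1 w2" using eq_trans[OF eq_trans[OF eq_sym[OF ts_w[OF w(1)]]] ts_w[OF w(2)]] by blast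
      then show "X = Y" using w cls_eq by simp
    qed
  next
    show "substF V E s ` carrier (RAAG V E) = carrier (RAAG V E)"
    proof
      show "substF V E s ` carrier (RAAG V E) \<subseteq> carrier (RAAG V E)"
        using hom unfolding hom_def by auto
    next
      show "carrier (RAAG V E) \<subseteq> substF V E s ` carrier (RAAG V E)"
      proof
        fix Y assume "Y \<in> carrier (RAAG V E)"
        then obtain w where w: "w \<in> raag_words V" "Y = raag_cls V E w" unfolding carrier_RAAG by blast
        have tw: "wsubst t w \<in> raag_words V" using wsubst_words[where s=t, OF w(1) t_w] .
        have "substF V E s (raag_cls V E (wsubst t w)) = Y"
          using substF_cls[OF tw cs] cls_eq[OF st_w[OF w(1)]] w(2) by simp
        moreover have "raag_cls V E (wsubst t w) \<in> carrier (RAAG V E)" using tw by (simp add: carrier_RAAG)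
        ultimately show "Y \<in> substF V E s ` carrier (RAAG V E)" by blast
      qed
    qed
  qed
  show ?thesis using hom bij by (simp add: iso_def)
qed



definition Dr :: "('a \<Rightarrow> 'a \<Rightarrow> bool) \<Rightarrow> 'a \<Rightarrow> 'a \<Rightarrow> bool" where
  "Dr E u u' \<longleftrightarrow> (\<forall>y. E u y \<longrightarrow> y = u' \<or> E u' y)"

definition gext :: "'b set \<Rightarrow> ('b \<Rightarrow> 'b) \<Rightarrow> 'b \<Rightarrow> 'b" where
  "gext C g x = (if x \<in> C then g x else x)"

locale cov0 =
  fixes VL :: "'a set" and EL :: "'a \<Rightarrow> 'a \<Rightarrow> bool"
    and VG :: "'b set" and EG :: "'b \<Rightarrow> 'b \<Rightarrow> bool" and p :: "'a \<Rightarrow> 'b"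
  assumes sL: "simple_graph VL EL" and sG: "simple_graph VG EG"
    and cm: "covering_map VL EL VG EG p"
begin

lemma EL_D: "EL x y \<Longrightarrow> x \<in> VL \<and> y \<in> VL \<and> x \<noteq> y \<and> EL y x"
  using sL by (auto simp: simple_graph_def)
lemma EG_D: "EG x y \<Longrightarrow> x \<in> VG \<and> y \<in> VG \<and> x \<noteq> y \<and> EG y x"
  using sG by (auto simp: simple_graph_def)
lemma p_VL: "u \<in> VL \<Longrightarrow> p u \<in> VG"
  using cm by (auto simp: covering_map_def)
lemma p_surj: "x \<in> VG \<Longrightarrow> \<exists>u\<in>VL. p u = x"
  using cm by (auto simp: covering_map_def)
lemma p_edge: "EL x y \<Longrightarrow> EG (p x) (p y)"
  using cm by (auto simp: covering_map_def)
lemma nbr_bij: "u \<in> VL \<Longrightarrow> bij_betw p (nbrs VL EL u) (nbrs VG EG (p u))"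
  using cm by (auto simp: covering_map_def)

lemma nbr_inj: assumes "EL w a" "EL w c" "p a = p c" shows "a = c"
proof -
  have "w \<in> VL" using EL_D assms by blast
  then have "inj_on p (nbrs VL EL w)" using nbr_bij bij_betw_def by blast
  moreover have "a \<in> nbrs VL EL w" "c \<in> nbrs VL EL w" using assms EL_D by (auto simp: nbrs_def)
  ultimately show ?thesis using assms(3) by (auto dest: inj_onD)
qed

lemma fib_nonadj: "p a = p c \<Longrightarrow> \<not> EL a c"
  using p_edge EG_D by fastforce

lemma lift_edge: assumes "u \<in> VL" "EG (p u) y" shows "\<exists>c. EL u c \<and> p c = y"
proof -
  have "y \<in> nbrs VG EG (p u)" using assms EG_D by (auto simp: nbrs_def)
  then have "y \<in> p ` nbrs VL EL u" using nbr_bij[OF assms(1)] bij_betw_imp_surj_on by metis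
  then show ?thesis by (auto simp: nbrs_def)
qed

lemma nbr_iff: "u \<in> VL \<Longrightarrow> (\<exists>w. EL u w) \<longleftrightarrow> (\<exists>y. EG (p u) y)"
  using p_edge lift_edge by blast

lemma lk_st: "lk VL EL u \<subseteq> st VL EL u' \<longleftrightarrow> Dr EL u u'"
  unfolding lk_def st_def nbrs_def Dr_def using EL_D by auto

lemma phi_le_D: "phi_le VL EL p x y \<longleftrightarrow> (\<forall>u\<in>VL. p u = x \<longrightarrow> (\<exists>u'\<in>VL. p u' = y \<and> Dr EL u u'))"
  unfolding phi_le_def lk_st ..

lemma D_refl: "Dr EL u u" by (simp add: Dr_def)

lemma D_trans: assumes "Dr EL u u'" "Dr EL u' u''" "u \<noteq> u''" shows "Dr EL u u''"
  unfolding Dr_def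
proof (intro allI impI)
  fix y assume y: "EL u y"
  show "y = u'' \<or> EL u'' y"
  proof (cases "y = u'")
    case False
    then have "EL u' y" using assms(1) y by (auto simp: Dr_def)
    then show ?thesis using assms(2) by (auto simp: Dr_def)
  next
    case True
    then have "EL u' u" using y EL_D by blast
    then have "EL u'' u" using assms(2,3) by (auto simp: Dr_def)
    then have "EL u u''" using EL_D by blast
    then have "u'' = u' \<or> EL u' u''" using assms(1) by (auto simp: Dr_def)
    then show ?thesis using True EL_D by blast
  qed
qed

lemma D_unique: assumes "EL u y" "Dr EL u a" "Dr EL u c" "p a = p c" shows "a = c"
proof -
  consider "y = a" | "y = c" | "y \<noteq> a" "y \<noteq> c" by blast
  then show ?thesis
  proof cases
    case 1
    then have "a = c \<or> EL c a" using assms(1,3) by (auto simp: Dr_def)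
    then show ?thesis using fib_nonadj assms(4) by metis
  next
    case 2
    then have "c = a \<or> EL a c" using assms(1,2) by (auto simp: Dr_def)
    then show ?thesis using fib_nonadj assms(4) by metis
  next
    case 3
    then have "EL a y" "EL c y" using assms by (auto simp: Dr_def)
    then show ?thesis using nbr_inj EL_D assms(4) by blast
  qed
qed

lemma nbr_transfer: assumes "EL u w" "Dr EL u u'" shows "\<exists>w'. EL u' w'"
  using assms EL_D unfolding Dr_def by metis

lemma phi_le_trans: assumes "phi_le VL EL p x y" "phi_le VL EL p y z" shows "phi_le VL EL p x z"
  unfolding phi_le_D
proof (intro ballI impI)
  fix u assume u: "u \<in> VL" "p u = x"
  obtain u' where u': "u' \<in> VL" "p u' = y" "Dr EL u u'" using assms(1) u unfolding phi_le_D by blast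
  obtain u'' where u'': "u'' \<in> VL" "p u'' = z" "Dr EL u' u''" using assms(2) u' unfolding phi_le_D by blast
  show "\<exists>u'\<in>VL. p u' = z \<and> Dr EL u u'"
  proof (cases "u = u''")
    case True then show ?thesis using u'' D_refl[of u] by blast
  next
    case False then show ?thesis using u'' D_trans[OF u'(3) u''(3)] by auto
  qed
qed

end

locale cov = cov0 +
  fixes C :: "'b set"
  assumes CV: "C \<subseteq> VG" and Cle: "\<And>x y. x \<in> C \<Longrightarrow> y \<in> C \<Longrightarrow> phi_le VL EL p x y"
begin

lemma Cex: "u \<in> VL \<Longrightarrow> p u \<in> C \<Longrightarrow> z \<in> C \<Longrightarrow> \<exists>u'\<in>VL. p u' = z \<and> Dr EL u u'"
  using Cle[of "p u" z] unfolding phi_le_D by blast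

definition mu :: "('b \<Rightarrow> 'b) \<Rightarrow> 'a \<Rightarrow> 'a" where
  "mu g u = (if u \<in> VL \<and> p u \<in> C then THE u'. u' \<in> VL \<and> p u' = g (p u) \<and> Dr EL u u' else u)"

lemma one_of: "(\<forall>u\<in>VL. p u \<in> C \<longrightarrow> (\<exists>w. EL u w)) \<or> (\<forall>u\<in>VL. p u \<in> C \<longrightarrow> (\<forall>w. \<not> EL u w))"
proof (rule ccontr)
  assume "\<not> ?thesis"
  then obtain u1 u2 w where u: "u1 \<in> VL" "p u1 \<in> C" "EL u1 w" "u2 \<in> VL" "p u2 \<in> C" "\<forall>w. \<not> EL u2 w"
    by blast
  obtain u' where u': "u' \<in> VL" "p u' = p u2" "Dr EL u1 u'" using Cex[OF u(1,2,5)] by blast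
  have "\<exists>w. EL u' w" using nbr_transfer[OF u(3) u'(3)] .
  then have "\<exists>y. EG (p u2) y" using nbr_iff[OF u'(1)] u'(2) by simp
  then show False using nbr_iff[OF u(4)] u(6) by blast
qed

lemma gext_VG: "(\<And>x. x \<in> C \<Longrightarrow> g x \<in> C) \<Longrightarrow> x \<in> VG \<Longrightarrow> gext C g x \<in> VG"
  using CV by (auto simp: gext_def)

end

locale cov_ni = cov +
  assumes ni: "\<And>u. u \<in> VL \<Longrightarrow> p u \<in> C \<Longrightarrow> \<exists>w. EL u w"
begin

lemma mu_prop: assumes "u \<in> VL" "p u \<in> C" "g (p u) \<in> C"
  shows "mu g u \<in> VL \<and> p (mu g u) = g (p u) \<and> Dr EL u (mu g u)"
proof -
  obtain u' where u': "u' \<in> VL" "p u' = g (p u)" "Dr EL u u'" using Cex[OF assms] by blast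
  obtain w where w: "EL u w" using ni assms by blast
  have "\<exists>!u'. u' \<in> VL \<and> p u' = g (p u) \<and> Dr EL u u'"
    using u' D_unique[OF w] by metis
  then have "(THE u'. u' \<in> VL \<and> p u' = g (p u) \<and> Dr EL u u') \<in> VL \<and>
     p (THE u'. u' \<in> VL \<and> p u' = g (p u) \<and> Dr EL u u') = g (p u) \<and>
     Dr EL u (THE u'. u' \<in> VL \<and> p u' = g (p u) \<and> Dr EL u u')" by (rule theI')
  then show ?thesis unfolding mu_def using assms by simp
qed

lemma mu_unique: assumes "u \<in> VL" "p u \<in> C" "g (p u) \<in> C" "u' \<in> VL" "p u' = g (p u)" "Dr EL u u'"
  shows "mu g u = u'"
proof -
  obtain w where w: "EL u w" using ni assms by blast
  show ?thesis using mu_prop[where g=g, OF assms(1-3)] assms D_unique[OF w] by metis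
qed

lemma mu_out: "u \<notin> VL \<or> p u \<notin> C \<Longrightarrow> mu g u = u"
  by (auto simp: mu_def)

context
  fixes g h assumes gC: "\<And>x. x \<in> C \<Longrightarrow> g x \<in> C" and hC: "\<And>x. x \<in> C \<Longrightarrow> h x \<in> C"
    and hg: "\<And>x. x \<in> C \<Longrightarrow> h (g x) = x" and gh: "\<And>x. x \<in> C \<Longrightarrow> g (h x) = x"
begin

lemma mu_VL: "u \<in> VL \<Longrightarrow> mu g u \<in> VL"
  using mu_prop[of u g] mu_out[of u g] gC by metis

lemma mu_p: "u \<in> VL \<Longrightarrow> p (mu g u) = gext C g (p u)"
  using mu_prop[of u g] mu_out[of u g] gC by (auto simp: gext_def)

lemma mu_inv: assumes "u \<in> VL" shows "mu h (mu g u) = u"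
proof (cases "p u \<in> C")
  case False then show ?thesis using mu_out by metis
next
  case True
  let ?u1 = "mu g u"
  have u1: "?u1 \<in> VL" "p ?u1 = g (p u)" "Dr EL u ?u1" using mu_prop[where g=g, OF assms True gC[OF True]] by auto
  have c1: "p ?u1 \<in> C" using u1 gC True by simp
  let ?u2 = "mu h ?u1"
  have u2: "?u2 \<in> VL" "p ?u2 = p u" "Dr EL ?u1 ?u2" using mu_prop[where g=h, OF u1(1) c1 hC[OF c1]] u1 hg True by auto
  show ?thesis
  proof (rule ccontr)
    assume ne: "?u2 \<noteq> u"
    have "Dr EL u ?u2" using D_trans[OF u1(3) u2(3)] ne by metis
    moreover obtain w where "EL u w" using ni assms True by blast
    ultimately show False using D_unique[of u w ?u2 u] D_refl u2(2) ne by metis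
  qed
qed

lemma mu_edge: assumes e: "EL a c" shows "EL (mu g a) (mu g c)"
proof -
  have a: "a \<in> VL" and c: "c \<in> VL" using e EL_D by auto
  consider "p a \<notin> C" "p c \<notin> C" | "p a \<in> C" "p c \<notin> C" | "p a \<notin> C" "p c \<in> C" | "p a \<in> C" "p c \<in> C"
    by blast
  then show ?thesis
  proof cases
    case 1 then show ?thesis using mu_out e by metis
  next
    case 2
    have m: "mu g a \<in> VL" "p (mu g a) = g (p a)" "Dr EL a (mu g a)" using mu_prop[where g=g, OF a 2(1) gC[OF 2(1)]] by auto
    have "c \<noteq> mu g a" using m(2) gC[OF 2(1)] 2(2) by auto
    then have "EL (mu g a) c" using m(3) e by (auto simp: Dr_def)
    then show ?thesis using mu_out 2 by metis
  next
    case 3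
    have m: "mu g c \<in> VL" "p (mu g c) = g (p c)" "Dr EL c (mu g c)" using mu_prop[where g=g, OF c 3(2) gC[OF 3(2)]] by auto
    have "a \<noteq> mu g c" using m(2) gC[OF 3(2)] 3(1) by auto
    moreover have "EL c a" using e EL_D by blast
    ultimately have "EL (mu g c) a" using m(3) by (auto simp: Dr_def)
    then show ?thesis using mu_out 3 EL_D by metis
  next
    case 4
    let ?a' = "mu g a" and ?c' = "mu g c"
    have ma: "?a' \<in> VL" "p ?a' = g (p a)" "Dr EL a ?a'" using mu_prop[where g=g, OF a 4(1) gC[OF 4(1)]] by auto
    have mc: "?c' \<in> VL" "p ?c' = g (p c)" "Dr EL c ?c'" using mu_prop[where g=g, OF c 4(2) gC[OF 4(2)]] by auto
    have "p a \<noteq> p c" using fib_nonadj e by metis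
    then have ne: "p ?a' \<noteq> p ?c'" using ma mc hg 4 by metis
    have "?a' = c \<or> EL ?a' c" using ma(3) e by (auto simp: Dr_def)
    then show ?thesis
    proof
      assume "EL ?a' c"
      then have "EL c ?a'" using EL_D by blast
      then have "?a' = ?c' \<or> EL ?c' ?a'" using mc(3) by (auto simp: Dr_def)
      then show ?thesis using ne EL_D by metis
    next
      assume eq: "?a' = c"
      have "EL c a" using e EL_D by blast
      then have "a = ?c' \<or> EL ?c' a" using mc(3) by (auto simp: Dr_def)
      then show ?thesis
      proof
        assume "a = ?c'" then show ?thesis using eq e EL_D by metis
      next
        assume "EL ?c' a"
        then have "EL a ?c'" using EL_D by blast
        then have "?c' = ?a' \<or> EL ?a' ?c'" using ma(3) by (auto simp: Dr_def)
        then show ?thesis using ne by metis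
      qed
    qed
  qed
qed

lemma gext_edge: assumes "EG x y" shows "EG (gext C g x) (gext C g y)"
proof -
  have "x \<in> VG" using assms EG_D by blast
  then obtain a where a: "a \<in> VL" "p a = x" using p_surj by blast
  then obtain c where c: "EL a c" "p c = y" using lift_edge assms by blast
  have "EL (mu g a) (mu g c)" using mu_edge[OF c(1)] .
  then have "EG (p (mu g a)) (p (mu g c))" by (rule p_edge)
  then show ?thesis using mu_p a c EL_D by metis
qed

end
end


locale cov_iso = cov +
  assumes isol: "\<And>u w. u \<in> VL \<Longrightarrow> p u \<in> C \<Longrightarrow> \<not> EL u w"
begin

lemma C_isol: assumes "EG x y" shows "x \<notin> C"
proof
  assume "x \<in> C"
  then obtain u where "u \<in> VL" "p u = x" using CV p_surj by blast
  then show False using lift_edge assms isol \<open>x \<in> C\<close> by blast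
qed

lemma gext_edge_iso: assumes "EG x y" shows "EG (gext C g x) (gext C g y)"
  using C_isol[OF assms] C_isol[of y x] assms EG_D by (auto simp: gext_def)

definition bse :: "'b \<Rightarrow> 'a" where "bse x = (SOME u. u \<in> VL \<and> p u = x)"

lemma bse: "x \<in> C \<Longrightarrow> bse x \<in> VL \<and> p (bse x) = x"
  unfolding bse_def using CV p_surj by (metis (mono_tags, lifting) someI_ex subsetD)

definition sg :: "('b \<Rightarrow> 'b) \<Rightarrow> 'a \<Rightarrow> 'a word" where
  "sg g a = (if a \<in> VL \<and> p a \<in> C then
      (if a = bse (p a) then [(bse (g (p a)), True)]
       else [(bse (g (p a)), True), (bse (p a), False), (a, True)])
     else [(a, True)])"

lemma sg_comm: "commutes EL EL (sg g)"
  unfolding commutes_def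
proof (intro allI impI)
  fix a c b d assume e: "EL a c"
  then have "\<not> (a \<in> VL \<and> p a \<in> C)" "\<not> (c \<in> VL \<and> p c \<in> C)" using isol EL_D by blast+
  then have "sg g a = [(a, True)]" "sg g c = [(c, True)]" by (auto simp: sg_def)
  then have "ltr (sg g) (a, b) = [(a, b)]" "ltr (sg g) (c, d) = [(c, d)]"
    by (auto simp: ltr_def)
  then show "raag_eq EL (ltr (sg g) (a, b) @ ltr (sg g) (c, d)) (ltr (sg g) (c, d) @ ltr (sg g) (a, b))"
    using eq_commute[of EL a c, OF e] by simp
qed

context
  fixes g h assumes gC: "\<And>x. x \<in> C \<Longrightarrow> g x \<in> C" and hC: "\<And>x. x \<in> C \<Longrightarrow> h x \<in> C"
    and hg: "\<And>x. x \<in> C \<Longrightarrow> h (g x) = x"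
begin

lemma sg_words: "a \<in> VL \<Longrightarrow> sg g a \<in> raag_words VL"
  using bse gC by (auto simp: sg_def raag_words_def)

lemma sg_inv: assumes a: "a \<in> VL" shows "raag_eq EL (wsubst (sg h) (sg g a)) [(a, True)]"
proof (cases "p a \<in> C")
  case False
  then show ?thesis using a by (simp add: sg_def ltr_def)
next
  case True
  let ?x = "p a"
  have b1: "bse (g ?x) \<in> VL" "p (bse (g ?x)) = g ?x" using bse gC True by auto
  have b2: "bse ?x \<in> VL" "p (bse ?x) = ?x" using bse True by auto
  have b3: "bse (h ?x) \<in> VL" "p (bse (h ?x)) = h ?x" using bse hC True by auto
  have s1: "sg h (bse (g ?x)) = [(bse ?x, True)]"
    using b1 gC[OF True] hg[OF True] by (simp add: sg_def)
  show ?thesis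
  proof (cases "a = bse ?x")
    case True
    then have "sg g a = [(bse (g ?x), True)]" using a \<open>?x \<in> C\<close> by (simp add: sg_def)
    then show ?thesis using s1 True by (simp add: ltr_def)
  next
    case False
    have sga: "sg g a = [(bse (g ?x), True), (bse ?x, False), (a, True)]"
      using a \<open>?x \<in> C\<close> False by (simp add: sg_def)
    have s2: "sg h (bse ?x) = [(bse (h ?x), True)]" using b2 \<open>?x \<in> C\<close> by (simp add: sg_def)
    have s3: "sg h a = [(bse (h ?x), True), (bse ?x, False), (a, True)]"
      using a \<open>?x \<in> C\<close> False by (simp add: sg_def)
    have w: "wsubst (sg h) (sg g a) = [(bse ?x, True)] @ [(bse (h ?x), False), (bse (h ?x), True)] @ [(bse ?x, False), (a, True)]"
      using sga s1 s2 s3 by (simp add: ltr_def)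
    have "raag_eq EL (wsubst (sg h) (sg g a)) ([(bse ?x, True)] @ [] @ [(bse ?x, False), (a, True)])"
      unfolding w using eq_ctx[OF eq_cancel[of EL "bse (h ?x)" False], of "[(bse ?x, True)]" "[(bse ?x, False), (a, True)]"] by simp
    moreover have "raag_eq EL ([] @ [(bse ?x, True), (bse ?x, False)] @ [(a, True)]) ([] @ [] @ [(a, True)])"
      using eq_ctx[OF eq_cancel[of EL "bse ?x" True], of "[]" "[(a, True)]"] by simp
    ultimately show ?thesis using eq_trans by simp
  qed
qed

lemma sg_lift: assumes a: "a \<in> VL"
  shows "raag_eq EG (wsubst (\<lambda>a. [(p a, True)]) (sg g a)) [(gext C g (p a), True)]"
proof (cases "p a \<in> C")
  case False
  then show ?thesis using a by (simp add: sg_def ltr_def gext_def)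
next
  case True
  let ?x = "p a"
  have b1: "p (bse (g ?x)) = g ?x" using bse gC True by auto
  have b2: "p (bse ?x) = ?x" using bse True by auto
  show ?thesis
  proof (cases "a = bse ?x")
    case True
    then show ?thesis using a \<open>?x \<in> C\<close> b1 by (simp add: sg_def ltr_def gext_def)
  next
    case False
    have "wsubst (\<lambda>a. [(p a, True)]) (sg g a) = [(g ?x, True)] @ [(?x, False), (?x, True)] @ []"
      using a \<open>?x \<in> C\<close> False b1 b2 by (simp add: sg_def ltr_def)
    moreover have "raag_eq EG ([(g ?x, True)] @ [(?x, False), (?x, True)] @ []) ([(g ?x, True)] @ [] @ [])"
      using eq_ctx[OF eq_cancel[of EG ?x False], of "[(g ?x, True)]" "[]"] by simp
    ultimately show ?thesis using \<open>?x \<in> C\<close> by (simp add: gext_def)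
  qed
qed

end
end

context cov
begin

context
  fixes g h assumes gC: "\<And>x. x \<in> C \<Longrightarrow> g x \<in> C" and hC: "\<And>x. x \<in> C \<Longrightarrow> h x \<in> C"
    and hg: "\<And>x. x \<in> C \<Longrightarrow> h (g x) = x" and gh: "\<And>x. x \<in> C \<Longrightarrow> g (h x) = x"
    and eg: "\<And>x y. EG x y \<Longrightarrow> EG (gext C g x) (gext C g y)"
    and eh: "\<And>x y. EG x y \<Longrightarrow> EG (gext C h x) (gext C h y)"
begin

lemma hg_ext: "gext C h (gext C g x) = x"
  using gC hg by (auto simp: gext_def)
lemma gh_ext: "gext C g (gext C h x) = x"
  using hC gh by (auto simp: gext_def)

lemma gext_aut: "graph_aut VG EG (gext C g)"
  unfolding graph_aut_def
proof
  show "bij_betw (gext C g) VG VG"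
    by (rule bij_betwI[where g="gext C h"]) (auto intro: gext_VG gC hC simp: hg_ext gh_ext)
  show "\<forall>x\<in>VG. \<forall>y\<in>VG. EG x y = EG (gext C g x) (gext C g y)"
  proof (intro ballI iffI)
    fix x y assume "EG x y" then show "EG (gext C g x) (gext C g y)" by (rule eg)
  next
    fix x y assume "EG (gext C g x) (gext C g y)"
    then have "EG (gext C h (gext C g x)) (gext C h (gext C g y))" by (rule eh)
    then show "EG x y" by (simp add: hg_ext)
  qed
qed

lemma gext_iso: "raag_map VG VG EG (gext C g) \<in> iso (RAAG VG EG) (RAAG VG EG)"
  unfolding raag_map_substF
proof (rule substF_iso[where t="\<lambda>a. [(gext C h a, True)]"])
  show "\<And>a. a \<in> VG \<Longrightarrow> [(gext C g a, True)] \<in> raag_words VG"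
    using gext_VG gC by (auto simp: raag_words_def)
  show "\<And>a. a \<in> VG \<Longrightarrow> [(gext C h a, True)] \<in> raag_words VG"
    using gext_VG hC by (auto simp: raag_words_def)
  show "commutes EG EG (\<lambda>a. [(gext C g a, True)])" using eg by (rule commutes_single)
  show "commutes EG EG (\<lambda>a. [(gext C h a, True)])" using eh by (rule commutes_single)
  show "\<And>a. raag_eq EG (wsubst (\<lambda>a. [(gext C h a, True)]) [(gext C g a, True)]) [(a, True)]"
    by (simp add: ltr_def hg_ext)
  show "\<And>a. raag_eq EG (wsubst (\<lambda>a. [(gext C g a, True)]) [(gext C h a, True)]) [(a, True)]"
    by (simp add: ltr_def gh_ext)
qed

lemma lift_eq:
  assumes X: "X \<in> carrier (RAAG VL EL)" and cs: "commutes EL EL s"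
    and sw: "\<And>a. a \<in> VL \<Longrightarrow> s a \<in> raag_words VL"
    and sc: "\<And>a. a \<in> VL \<Longrightarrow> raag_eq EG (wsubst (\<lambda>a. [(p a, True)]) (s a)) [(gext C g (p a), True)]"
  shows "raag_map VG VG EG (gext C g) (raag_map VL VG EG p X) = raag_map VL VG EG p (substF VL EL s X)"
proof -
  obtain w where w: "w \<in> raag_words VL" "X = raag_cls VL EL w" using X by (auto simp: carrier_RAAG)
  let ?P = "\<lambda>a. [(p a, True)]" and ?G = "\<lambda>a. [(gext C g a, True)]"
  have cP: "commutes EL EG ?P" using p_edge by (rule commutes_single)
  have cG: "commutes EG EG ?G" using eg by (rule commutes_single)
  have Pw: "wsubst ?P w \<in> raag_words VG"
    using wsubst_words[of w VL ?P VG] w p_VL by (auto simp: raag_words_def)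
  have sw': "wsubst s w \<in> raag_words VL" using wsubst_words[of w VL s VL] w sw by auto
  have "raag_map VG VG EG (gext C g) (raag_map VL VG EG p X) = raag_cls VG EG (wsubst ?G (wsubst ?P w))"
    unfolding raag_map_substF w(2) using substF_cls[OF w(1) cP] substF_cls[OF Pw cG] by simp
  also have "\<dots> = raag_cls VG EG (wsubst (\<lambda>a. [(gext C g (p a), True)]) w)"
    by (simp add: wsubst_comp ltr_def)
  also have "\<dots> = raag_cls VG EG (wsubst (\<lambda>a. wsubst ?P (s a)) w)"
  proof (rule cls_eq, rule wsubst_cong)
    fix a assume "a \<in> fst ` set w"
    then have "a \<in> VL" using w(1) by (auto simp: raag_words_def)
    then show "raag_eq EG [(gext C g (p a), True)] (wsubst ?P (s a))" using sc eq_sym by blast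
  qed
  also have "\<dots> = raag_map VL VG EG p (substF VL EL s X)"
    unfolding raag_map_substF w(2) using substF_cls[OF w(1) cs] substF_cls[OF sw' cP]
    by (simp add: wsubst_comp)
  finally show ?thesis .
qed

end
end



theorem lemma4p1:
  fixes VL :: "'a set" and EL :: "'a \<Rightarrow> 'a \<Rightarrow> bool"
    and VG :: "'b set" and EG :: "'b \<Rightarrow> 'b \<Rightarrow> bool"
    and p :: "'a \<Rightarrow> 'b" and v :: 'b and \<gamma>v :: "'b \<Rightarrow> 'b"
  assumes "simple_graph VL EL" and "simple_graph VG EG"
    and "regular_covering VL EL VG EG p"
    and "v \<in> VG"
    and "bij_betw \<gamma>v (phi_class VL EL VG p v) (phi_class VL EL VG p v)"
  defines "\<gamma> \<equiv> (\<lambda>w. if w \<in> phi_class VL EL VG p v then \<gamma>v w else w)"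
  shows "graph_aut VG EG \<gamma> \<and>
         raag_map VG VG EG \<gamma> \<in> iso (RAAG VG EG) (RAAG VG EG) \<and>
         liftable VL EL VG EG p (raag_map VG VG EG \<gamma>)"
proof -
  define C where "C = phi_class VL EL VG p v"
  interpret c0: cov0 VL EL VG EG p
    using assms(1-3) by unfold_locales (auto simp: regular_covering_def)
  have Cle: "\<And>x y. x \<in> C \<Longrightarrow> y \<in> C \<Longrightarrow> phi_le VL EL p x y"
    using c0.phi_le_trans unfolding C_def phi_class_def phi_equiv_def by blast
  interpret c: cov VL EL VG EG p C
    using Cle by unfold_locales (auto simp: C_def phi_class_def)
  have bij: "bij_betw \<gamma>v C C" using assms(5) C_def by simp
  define h where "h = inv_into C \<gamma>v"
  have gC: "\<And>x. x \<in> C \<Longrightarrow> \<gamma>v x \<in> C" using bij bij_betwE by blast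
  have hC: "\<And>x. x \<in> C \<Longrightarrow> h x \<in> C" unfolding h_def using bij
    by (metis bij_betw_def inv_into_into)
  have hg: "\<And>x. x \<in> C \<Longrightarrow> h (\<gamma>v x) = x" unfolding h_def using bij bij_betw_inv_into_left by metis
  have gh: "\<And>x. x \<in> C \<Longrightarrow> \<gamma>v (h x) = x" unfolding h_def using bij bij_betw_inv_into_right by metis
  have \<gamma>_eq: "\<gamma> = gext C \<gamma>v" by (simp add: \<gamma>_def gext_def C_def fun_eq_iff)
  show ?thesis
    using c.one_of
  proof
    assume ni: "\<forall>u\<in>VL. p u \<in> C \<longrightarrow> (\<exists>w. EL u w)"
    interpret n: cov_ni VL EL VG EG p C using ni by unfold_locales blast
    have eg: "\<And>x y. EG x y \<Longrightarrow> EG (gext C \<gamma>v x) (gext C \<gamma>v y)"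
      using n.gext_edge[OF gC hC hg gh] .
    have eh: "\<And>x y. EG x y \<Longrightarrow> EG (gext C h x) (gext C h y)"
      using n.gext_edge[OF hC gC gh hg] .
    have F_iso: "substF VL EL (\<lambda>a. [(c.mu \<gamma>v a, True)]) \<in> iso (RAAG VL EL) (RAAG VL EL)"
    proof (rule substF_iso[where t="\<lambda>a. [(c.mu h a, True)]"])
      show "\<And>a. a \<in> VL \<Longrightarrow> [(c.mu \<gamma>v a, True)] \<in> raag_words VL"
        using n.mu_VL[OF gC hC hg gh] by (auto simp: raag_words_def)
      show "\<And>a. a \<in> VL \<Longrightarrow> [(c.mu h a, True)] \<in> raag_words VL"
        using n.mu_VL[OF hC gC gh hg] by (auto simp: raag_words_def)
      show "commutes EL EL (\<lambda>a. [(c.mu \<gamma>v a, True)])"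
        using n.mu_edge[OF gC hC hg gh] by (rule commutes_single)
      show "commutes EL EL (\<lambda>a. [(c.mu h a, True)])"
        using n.mu_edge[OF hC gC gh hg] by (rule commutes_single)
      show "\<And>a. a \<in> VL \<Longrightarrow> raag_eq EL (wsubst (\<lambda>a. [(c.mu h a, True)]) [(c.mu \<gamma>v a, True)]) [(a, True)]"
        using n.mu_inv[OF gC hC hg gh] by (simp add: ltr_def)
      show "\<And>a. a \<in> VL \<Longrightarrow> raag_eq EL (wsubst (\<lambda>a. [(c.mu \<gamma>v a, True)]) [(c.mu h a, True)]) [(a, True)]"
        using n.mu_inv[OF hC gC gh hg] by (simp add: ltr_def)
    qed
    have lift: "liftable VL EL VG EG p (raag_map VG VG EG (gext C \<gamma>v))"
      unfolding liftable_def
    proof (intro bexI[OF _ F_iso] ballI)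
      fix X assume X: "X \<in> carrier (RAAG VL EL)"
      show "raag_map VG VG EG (gext C \<gamma>v) (raag_map VL VG EG p X) =
            raag_map VL VG EG p (substF VL EL (\<lambda>a. [(c.mu \<gamma>v a, True)]) X)"
      proof (rule c.lift_eq[OF gC hC hg gh eg eh X])
        show "commutes EL EL (\<lambda>a. [(c.mu \<gamma>v a, True)])"
          using n.mu_edge[OF gC hC hg gh] by (rule commutes_single)
        show "\<And>a. a \<in> VL \<Longrightarrow> [(c.mu \<gamma>v a, True)] \<in> raag_words VL"
          using n.mu_VL[OF gC hC hg gh] by (auto simp: raag_words_def)
        show "\<And>a. a \<in> VL \<Longrightarrow> raag_eq EG (wsubst (\<lambda>a. [(p a, True)]) [(c.mu \<gamma>v a, True)])
                 [(gext C \<gamma>v (p a), True)]"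
          using n.mu_p[OF gC hC hg gh] by (simp add: ltr_def)
      qed
    qed
    show ?thesis
      unfolding \<gamma>_eq using c.gext_aut[OF gC hC hg gh eg eh] c.gext_iso[OF gC hC hg gh eg eh] lift
      by blast
  next
    assume isl: "\<forall>u\<in>VL. p u \<in> C \<longrightarrow> (\<forall>w. \<not> EL u w)"
    interpret i: cov_iso VL EL VG EG p C using isl by unfold_locales blast
    have eg: "\<And>x y. EG x y \<Longrightarrow> EG (gext C \<gamma>v x) (gext C \<gamma>v y)"
      using i.gext_edge_iso .
    have eh: "\<And>x y. EG x y \<Longrightarrow> EG (gext C h x) (gext C h y)"
      using i.gext_edge_iso .
    have F_iso: "substF VL EL (i.sg \<gamma>v) \<in> iso (RAAG VL EL) (RAAG VL EL)"
    proof (rule substF_iso[where t="i.sg h"])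
      show "\<And>a. a \<in> VL \<Longrightarrow> i.sg \<gamma>v a \<in> raag_words VL"
        using i.sg_words[OF gC hC hg] .
      show "\<And>a. a \<in> VL \<Longrightarrow> i.sg h a \<in> raag_words VL"
        using i.sg_words[OF hC gC gh] .
      show "commutes EL EL (i.sg \<gamma>v)" by (rule i.sg_comm)
      show "commutes EL EL (i.sg h)" by (rule i.sg_comm)
      show "\<And>a. a \<in> VL \<Longrightarrow> raag_eq EL (wsubst (i.sg h) (i.sg \<gamma>v a)) [(a, True)]"
        using i.sg_inv[OF gC hC hg] .
      show "\<And>a. a \<in> VL \<Longrightarrow> raag_eq EL (wsubst (i.sg \<gamma>v) (i.sg h a)) [(a, True)]"
        using i.sg_inv[OF hC gC gh] .
    qed
    have lift: "liftable VL EL VG EG p (raag_map VG VG EG (gext C \<gamma>v))"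
      unfolding liftable_def
    proof (intro bexI[OF _ F_iso] ballI)
      fix X assume X: "X \<in> carrier (RAAG VL EL)"
      show "raag_map VG VG EG (gext C \<gamma>v) (raag_map VL VG EG p X) =
            raag_map VL VG EG p (substF VL EL (i.sg \<gamma>v) X)"
      proof (rule c.lift_eq[OF gC hC hg gh eg eh X])
        show "commutes EL EL (i.sg \<gamma>v)" by (rule i.sg_comm)
        show "\<And>a. a \<in> VL \<Longrightarrow> i.sg \<gamma>v a \<in> raag_words VL"
          using i.sg_words[OF gC hC hg] .
        show "\<And>a. a \<in> VL \<Longrightarrow> raag_eq EG (wsubst (\<lambda>a. [(p a, True)]) (i.sg \<gamma>v a))
                 [(gext C \<gamma>v (p a), True)]"
          using i.sg_lift[OF gC hC hg] .
      qed
    qed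
    show ?thesis
      unfolding \<gamma>_eq using c.gext_aut[OF gC hC hg gh eg eh] c.gext_iso[OF gC hC hg gh eg eh] lift
      by blast
  qed
qed

end
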